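(* Let $K$ be a field and $(Q,f,g,c,W)$ as in the setting below, and assume that either $Q$ satisfies $(\star)$, or $Q$ satisfies $(\diamond)$ and $\prod_{\alpha\in\Omega}c_\alpha\neq1$ for $\Omega$ a set of representatives of the $g$-orbits. Then the potential $W$ is not rigid.
   Context: Setting: $Q$ is a finite quiver with arrow set $Q_1$, connected, without loops or $2$-cycles, every vertex being the source of exactly two arrows and the target of exactly two arrows, equipped with bijections $f,g:Q_1\to Q_1$ such that for each $\alpha$, $\{f(\alpha),g(\alpha)\}$ is the set of the two arrows starting at the target of $\alpha$, and $f^3=\mathrm{id}$. $n_\alpha$ is the size of the $g$-orbit of $\alpha$. $c:Q_1\to K^\times$ is constant on $g$-orbits. Paths compose left to right. $W=\sum_\alpha \alpha\cdot f(\alpha)\cdot f^2(\alpha)-\sum_\beta c_\beta\,\beta\cdot g(\beta)\cdots g^{n_\beta-1}(\beta)$ (sums over representatives of $f$-orbits, resp. $g$-orbits) in the completed path algebra $\widehat{KQ}$. The Jacobian ideal $J(W)$ is the closure of the two-sided ideal generated by the cyclic derivatives of $W$. $W$ is rigid if every potential on $Q$ is cyclically equivalent to an element of $J(W)$. $(\star)$: for every $\alpha$, $n_\alpha\ge4$ or $n_{f(\alpha)}\ge4$. $(\diamond)$: $n_\alpha=3$ for all $\alpha$. *)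

theory Defs
  imports Main
begin

text \<open>A path is a pair (v, xs): start vertex v and a composable list of arrows
  (paths compose left to right: t of xs!i equals s of xs!(i+1)); (v, []) is the trivial path e_v.
  Elements of the completed path algebra are functions path -> K supported on valid paths.\<close>

definition pend :: "('a \<Rightarrow> 'v) \<Rightarrow> 'v \<Rightarrow> 'a list \<Rightarrow> 'v" where
  "pend t v xs = (if xs = [] then v else t (last xs))"

definition is_path :: "('a \<Rightarrow> 'v) \<Rightarrow> ('a \<Rightarrow> 'v) \<Rightarrow> 'v \<times> 'a list \<Rightarrow> bool" where
  "is_path s t p = (case p of (v, xs) \<Rightarrow>
     (xs \<noteq> [] \<longrightarrow> s (hd xs) = v) \<and> (\<forall>i. Suc i < length xs \<longrightarrow> t (xs ! i) = s (xs ! Suc i)))"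

definition is_cycle :: "('a \<Rightarrow> 'v) \<Rightarrow> ('a \<Rightarrow> 'v) \<Rightarrow> 'v \<times> 'a list \<Rightarrow> bool" where
  "is_cycle s t p = (is_path s t p \<and> snd p \<noteq> [] \<and> pend t (fst p) (snd p) = fst p)"

definition cpa :: "('a \<Rightarrow> 'v) \<Rightarrow> ('a \<Rightarrow> 'v) \<Rightarrow> ('v \<times> 'a list \<Rightarrow> 'k::field) \<Rightarrow> bool" where
  "cpa s t x = (\<forall>p. x p \<noteq> 0 \<longrightarrow> is_path s t p)"

text \<open>Potential: element of the closed subspace spanned by cycles (of positive length).\<close>
definition potential :: "('a \<Rightarrow> 'v) \<Rightarrow> ('a \<Rightarrow> 'v) \<Rightarrow> ('v \<times> 'a list \<Rightarrow> 'k::field) \<Rightarrow> bool" where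
  "potential s t x = (\<forall>p. x p \<noteq> 0 \<longrightarrow> is_cycle s t p)"

definition pmul :: "('a \<Rightarrow> 'v) \<Rightarrow> ('v \<times> 'a list \<Rightarrow> 'k::field) \<Rightarrow> ('v \<times> 'a list \<Rightarrow> 'k) \<Rightarrow> 'v \<times> 'a list \<Rightarrow> 'k" where
  "pmul t x y = (\<lambda>(v, xs). \<Sum>i\<in>{0..length xs}. x (v, take i xs) * y (pend t v (take i xs), drop i xs))"

definition cyc :: "('a \<Rightarrow> 'v) \<Rightarrow> 'a list \<Rightarrow> 'v \<times> 'a list" where
  "cyc s xs = (s (hd xs), xs)"

definition delta :: "'p \<Rightarrow> 'p \<Rightarrow> 'k::field" where
  "delta p = (\<lambda>q. if q = p then 1 else 0)"

text \<open>Cyclic derivative with respect to the arrow a: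
  d_a (a1...ad) = sum over k with ak = a of a(k+1)...ad a1...a(k-1), extended continuously.
  The coefficient of q (a path from t a to s a) is the sum of the coefficients of W at the
  |q|+1 rotations of the cycle a q (one for each position of the letter a).\<close>
definition cder :: "('a \<Rightarrow> 'v) \<Rightarrow> ('a \<Rightarrow> 'v) \<Rightarrow> 'a \<Rightarrow> ('v \<times> 'a list \<Rightarrow> 'k::field) \<Rightarrow> 'v \<times> 'a list \<Rightarrow> 'k" where
  "cder s t a W = (\<lambda>(v, q). if is_path s t (v, q) \<and> v = t a \<and> pend t v q = s a
       then (\<Sum>j<Suc (length q). W (cyc s (rotate j (a # q)))) else 0)"

inductive_set ideal_span :: "('a \<Rightarrow> 'v) \<Rightarrow> ('a \<Rightarrow> 'v) \<Rightarrow> ('v \<times> 'a list \<Rightarrow> 'k::field) set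
    \<Rightarrow> ('v \<times> 'a list \<Rightarrow> 'k) set" for s t S where
  zero: "(\<lambda>_. 0) \<in> ideal_span s t S"
| step: "x \<in> ideal_span s t S \<Longrightarrow> y \<in> S \<Longrightarrow> cpa s t u \<Longrightarrow> cpa s t w \<Longrightarrow>
     (\<lambda>p. x p + pmul t (pmul t u y) w p) \<in> ideal_span s t S"

text \<open>Closure in the m-adic topology (m = arrow ideal): x is in the closure of X iff for every L
  some element of X agrees with x on all paths of length at most L.\<close>
definition mclosure :: "('a \<Rightarrow> 'v) \<Rightarrow> ('a \<Rightarrow> 'v) \<Rightarrow> ('v \<times> 'a list \<Rightarrow> 'k::field) set
    \<Rightarrow> ('v \<times> 'a list \<Rightarrow> 'k) set" where
  "mclosure s t X = {x. cpa s t x \<and> (\<forall>L. \<exists>y\<in>X. \<forall>p. length (snd p) \<le> L \<longrightarrow> x p = y p)}"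

definition jacobian_ideal :: "('a \<Rightarrow> 'v) \<Rightarrow> ('a \<Rightarrow> 'v) \<Rightarrow> ('v \<times> 'a list \<Rightarrow> 'k::field)
    \<Rightarrow> ('v \<times> 'a list \<Rightarrow> 'k) set" where
  "jacobian_ideal s t W = mclosure s t (ideal_span s t (range (\<lambda>a. cder s t a W)))"

inductive_set cyc_comm_span :: "('a \<Rightarrow> 'v) \<Rightarrow> ('a \<Rightarrow> 'v) \<Rightarrow> ('v \<times> 'a list \<Rightarrow> 'k::field) set"
  for s t where
  zero: "(\<lambda>_. 0) \<in> cyc_comm_span s t"
| step: "x \<in> cyc_comm_span s t \<Longrightarrow> is_cycle s t (v, xs) \<Longrightarrow>
     (\<lambda>p. x p + (k::'k) * (delta (v, xs) p - delta (cyc s (rotate1 xs)) p)) \<in> cyc_comm_span s t"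

definition cyc_equiv :: "('a \<Rightarrow> 'v) \<Rightarrow> ('a \<Rightarrow> 'v) \<Rightarrow> ('v \<times> 'a list \<Rightarrow> 'k::field)
    \<Rightarrow> ('v \<times> 'a list \<Rightarrow> 'k) \<Rightarrow> bool" where
  "cyc_equiv s t W W' = ((\<lambda>p. W p - W' p) \<in> mclosure s t (cyc_comm_span s t))"

definition rigid :: "('a \<Rightarrow> 'v) \<Rightarrow> ('a \<Rightarrow> 'v) \<Rightarrow> ('v \<times> 'a list \<Rightarrow> 'k::field) \<Rightarrow> bool" where
  "rigid s t W = (\<forall>P :: 'v \<times> 'a list \<Rightarrow> 'k. potential s t P \<longrightarrow>
       (\<exists>Y\<in>jacobian_ideal s t W. cyc_equiv s t P Y))"

definition orbit_size :: "('a \<Rightarrow> 'a) \<Rightarrow> 'a \<Rightarrow> nat" where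
  "orbit_size h a = card {(h ^^ k) a | k. True}"

definition orbit_reps :: "('a \<Rightarrow> 'a) \<Rightarrow> 'a set \<Rightarrow> bool" where
  "orbit_reps h R = (\<forall>a. \<exists>!b. b \<in> R \<and> (\<exists>k. (h ^^ k) a = b))"

definition QP_potential :: "('a \<Rightarrow> 'v) \<Rightarrow> ('a \<Rightarrow> 'a) \<Rightarrow> ('a \<Rightarrow> 'a) \<Rightarrow> ('a \<Rightarrow> 'k::field)
    \<Rightarrow> 'a set \<Rightarrow> 'a set \<Rightarrow> 'v \<times> 'a list \<Rightarrow> 'k" where
  "QP_potential s f g c Rf Rg = (\<lambda>p.
     (\<Sum>a\<in>Rf. delta (cyc s [a, f a, f (f a)]) p)
     - (\<Sum>b\<in>Rg. c b * delta (cyc s (map (\<lambda>k. (g ^^ k) b) [0..<orbit_size g b])) p))"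

end

theory Submission
  imports Defs
begin

section \<open>Periods of bijections\<close>

lemma funpow_split: "i \<le> j \<Longrightarrow> (g ^^ i) ((g ^^ (j - i)) y) = (g ^^ j) y"
  by (metis funpow_add comp_apply le_add_diff_inverse)

lemma period_exists:
  fixes g :: "'a::finite \<Rightarrow> 'a"
  assumes "inj g"
  shows "\<exists>m>0. (g ^^ m) y = y"
proof -
  let ?h = "\<lambda>k. (g ^^ k) y"
  have "\<not> inj_on ?h {..card (UNIV::'a set)}"
  proof
    assume "inj_on ?h {..card (UNIV::'a set)}"
    then have "card (?h ` {..card (UNIV::'a set)}) = card {..card (UNIV::'a set)}"
      by (rule card_image)
    moreover have "card (?h ` {..card (UNIV::'a set)}) \<le> card (UNIV::'a set)"
      by (rule card_mono) auto
    ultimately show False by simp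
  qed
  then obtain i j where ij: "i \<noteq> j" "(g ^^ i) y = (g ^^ j) y"
    unfolding inj_on_def by blast
  have inj: "inj (g ^^ n)" for n using assms by (rule inj_fn)
  show ?thesis
  proof (cases "i < j")
    case True
    have "(g ^^ i) ((g ^^ (j - i)) y) = (g ^^ i) y"
      using ij True by (simp add: funpow_split)
    then have "(g ^^ (j - i)) y = y" using inj[of i] by (auto dest: injD)
    then show ?thesis using True by (intro exI[of _ "j - i"]) auto
  next
    case False
    then have "j < i" using ij by auto
    have "(g ^^ j) ((g ^^ (i - j)) y) = (g ^^ j) y"
      using ij \<open>j < i\<close> by (simp add: funpow_split)
    then have "(g ^^ (i - j)) y = y" using inj[of j] by (auto dest: injD)
    then show ?thesis using \<open>j < i\<close> by (intro exI[of _ "i - j"]) auto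
  qed
qed

definition per :: "('a \<Rightarrow> 'a) \<Rightarrow> 'a \<Rightarrow> nat" where
  "per g y = (LEAST m. 0 < m \<and> (g ^^ m) y = y)"

lemma per_prop:
  fixes g :: "'a::finite \<Rightarrow> 'a"
  assumes "inj g"
  shows "0 < per g y \<and> (g ^^ per g y) y = y"
  unfolding per_def using period_exists[OF assms, of y] by (rule LeastI_ex)

lemma funpow_mult_fix:
  assumes "(g ^^ p) y = y"
  shows "(g ^^ (q * p)) y = y"
proof (induction q)
  case 0 then show ?case by simp
next
  case (Suc q)
  have "(g ^^ (Suc q * p)) y = (g ^^ p) ((g ^^ (q * p)) y)"
    by (simp add: funpow_add)
  then show ?case using Suc assms by simp
qed

lemma funpow_mod_per:
  fixes g :: "'a::finite \<Rightarrow> 'a"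
  assumes "inj g"
  shows "(g ^^ k) y = (g ^^ (k mod per g y)) y"
proof -
  let ?p = "per g y"
  have e: "(g ^^ (k mod ?p)) ((g ^^ ((k div ?p) * ?p)) y) = (g ^^ (k mod ?p + (k div ?p) * ?p)) y"
    by (simp only: funpow_add comp_apply)
  have "(g ^^ k) y = (g ^^ (k mod ?p)) ((g ^^ ((k div ?p) * ?p)) y)"
    unfolding e mod_div_mult_eq ..
  also have "(g ^^ ((k div ?p) * ?p)) y = y"
    using funpow_mult_fix[where g=g and p="?p" and y=y and q="k div ?p"] per_prop[OF assms, of y] by simp
  finally show ?thesis .
qed

lemma per_inj_on:
  fixes g :: "'a::finite \<Rightarrow> 'a"
  assumes "inj g"
  shows "inj_on (\<lambda>k. (g ^^ k) y) {..<per g y}"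
proof (rule ccontr)
  assume "\<not> ?thesis"
  then obtain i j where ij: "i < j" "j < per g y" "(g ^^ i) y = (g ^^ j) y"
    unfolding inj_on_def by (metis lessThan_iff linorder_neqE_nat)
  have "(g ^^ i) ((g ^^ (j - i)) y) = (g ^^ i) y"
    using ij by (simp add: funpow_split)
  then have "(g ^^ (j - i)) y = y" using inj_fn[OF assms, of i] by (auto dest: injD)
  moreover have "j - i < per g y" using ij by auto
  ultimately have "\<not> (0 < j - i \<and> (g ^^ (j - i)) y = y)"
    unfolding per_def by (intro not_less_Least) auto
  then show False using ij \<open>(g ^^ (j - i)) y = y\<close> by simp
qed

lemma orbit_set_eq:
  fixes g :: "'a::finite \<Rightarrow> 'a"
  assumes "inj g"
  shows "{(g ^^ k) y | k. True} = (\<lambda>k. (g ^^ k) y) ` {..<per g y}"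
proof -
  have "0 < per g y" using per_prop[OF assms] by blast
  show ?thesis
  proof
    show "{(g ^^ k) y | k. True} \<subseteq> (\<lambda>k. (g ^^ k) y) ` {..<per g y}"
    proof
      fix z assume "z \<in> {(g ^^ k) y | k. True}"
      then obtain k where "z = (g ^^ k) y" by blast
      then have "z = (g ^^ (k mod per g y)) y" using funpow_mod_per[OF assms] by simp
      moreover have "k mod per g y < per g y" using \<open>0 < per g y\<close> by simp
      ultimately show "z \<in> (\<lambda>k. (g ^^ k) y) ` {..<per g y}" by blast
    qed
  qed blast
qed

lemma orbit_size_per:
  fixes g :: "'a::finite \<Rightarrow> 'a"
  assumes "inj g"
  shows "orbit_size g y = per g y"
  unfolding orbit_size_def orbit_set_eq[OF assms]
  using card_image[OF per_inj_on[OF assms]] by simp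

lemma orbit_set_step:
  fixes g :: "'a::finite \<Rightarrow> 'a"
  assumes "inj g"
  shows "{(g ^^ k) (g y) | k. True} = {(g ^^ k) y | k. True}"
proof -
  have a: "(g ^^ k) (g y) = (g ^^ Suc k) y" for k by (simp add: funpow_swap1)
  have "y = (g ^^ (per g y - 1)) (g y)"
    using per_prop[OF assms, of y] by (simp add: a)
  have "(g ^^ k) y \<in> {(g ^^ k) (g y) | k. True}" for k
  proof -
    have "(g ^^ k) y = (g ^^ k) ((g ^^ (per g y - 1)) (g y))"
      using \<open>y = _\<close> by simp
    also have "\<dots> = (g ^^ (k + (per g y - 1))) (g y)" by (simp add: funpow_add)
    finally show ?thesis by blast
  qed
  moreover have "(g ^^ k) (g y) \<in> {(g ^^ k) y | k. True}" for k
    unfolding a by blast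
  ultimately show ?thesis by blast
qed

lemma orbit_size_step:
  fixes g :: "'a::finite \<Rightarrow> 'a"
  assumes "inj g"
  shows "orbit_size g (g y) = orbit_size g y"
  unfolding orbit_size_def orbit_set_step[OF assms] ..

lemma orbit_size_funpow:
  fixes g :: "'a::finite \<Rightarrow> 'a"
  assumes "inj g"
  shows "orbit_size g ((g ^^ j) y) = orbit_size g y"
  by (induction j) (simp_all add: orbit_size_step[OF assms])


section \<open>Chains\<close>

definition chain :: "('a \<Rightarrow> 'a) \<Rightarrow> 'a list \<Rightarrow> bool" where
  "chain h L = (\<forall>k. Suc k < length L \<longrightarrow> L ! Suc k = h (L ! k))"

lemma nth_drop_take: "m < length (drop j (take i L)) \<Longrightarrow> drop j (take i L) ! m = L ! (j + m)"
  by (simp add: drop_take, subst nth_drop, auto)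

lemma chain_sub: "chain h L \<Longrightarrow> chain h (drop j (take i L))"
  unfolding chain_def
proof (intro allI impI)
  fix k assume h: "\<forall>k. Suc k < length L \<longrightarrow> L ! Suc k = h (L ! k)"
    and k: "Suc k < length (drop j (take i L))"
  then have "Suc (j + k) < length L" by simp
  then show "drop j (take i L) ! Suc k = h (drop j (take i L) ! k)"
    using h k by (simp add: nth_drop_take)
qed

lemma rotate_back: "L \<noteq> [] \<Longrightarrow> L = rotate ((length L - 1) * j) (rotate j L)"
proof -
  assume "L \<noteq> []"
  then have "(length L - 1) * j + j = length L * j"
    by (cases "length L") auto
  then show ?thesis by (simp add: rotate_rotate)
qed

locale QP =
  fixes s t :: "'a::finite \<Rightarrow> 'v::finite"
    and f g :: "'a \<Rightarrow> 'a"
    and c :: "'a \<Rightarrow> 'k::field"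
    and Rf Rg :: "'a set"
  assumes no_loops: "\<forall>a. s a \<noteq> t a"
    and no_2cycles: "\<forall>a b. \<not> (s a = t b \<and> t a = s b)"
    and out2: "\<forall>v. card {a. s a = v} = 2"
    and bij_f: "bij f" and bij_g: "bij g"
    and fg: "\<forall>a. {f a, g a} = {b. s b = t a}"
    and f3: "f \<circ> f \<circ> f = id"
    and c_nz: "\<forall>a. c a \<noteq> 0"
    and c_const: "\<forall>a. c (g a) = c a"
    and Rf: "orbit_reps f Rf"
    and Rg: "orbit_reps g Rg"
begin

lemma sf[simp]: "s (f a) = t a" using fg by blast
lemma sg[simp]: "s (g a) = t a" using fg by blast
lemma fff[simp]: "f (f (f a)) = a" using f3 by (metis comp_apply id_apply)
lemma t_ff[simp]: "t (f (f a)) = s a" by (metis sf fff)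
lemma inj_f: "inj f" using bij_f bij_is_inj by blast
lemma inj_g: "inj g" using bij_g bij_is_inj by blast
lemma f_eq_iff[simp]: "f a = f b \<longleftrightarrow> a = b" using inj_f by (auto dest: injD)
lemma g_eq_iff[simp]: "g a = g b \<longleftrightarrow> a = b" using inj_g by (auto dest: injD)

lemma f_ne_g: "f a \<noteq> g a"
proof
  assume "f a = g a"
  then have "{b. s b = t a} = {f a}" using fg[rule_format, of a] by simp
  then have "card {b. s b = t a} = 1" by simp
  then show False using out2[rule_format, of "t a"] by simp
qed

lemma f_ne[simp]: "f a \<noteq> a" "f (f a) \<noteq> a" "f (f a) \<noteq> f a"
proof -
  show 1: "f a \<noteq> a" for a using no_loops sf by metis
  show "f (f a) \<noteq> a" using 1[of "f a"] by (metis fff)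
  show "f (f a) \<noteq> f a" using 1[of "f a"] .
qed

lemma c_pow[simp]: "c ((g ^^ j) a) = c a"
  by (induction j) (auto simp: c_const)

abbreviation n :: "'a \<Rightarrow> nat" where "n \<equiv> orbit_size g"

lemma n_per: "n a = per g a" using orbit_size_per[OF inj_g] .

lemma g_n[simp]: "(g ^^ n a) a = a" using per_prop[OF inj_g] n_per by simp

lemma n_ge3: "3 \<le> n a"
proof -
  have pos: "0 < n a" using per_prop[OF inj_g] n_per by simp
  have n1: "n a \<noteq> 1"
  proof
    assume "n a = 1"
    then have "g a = a" using g_n[of a] by simp
    then show False using no_loops sg by metis
  qed
  have n2: "n a \<noteq> 2"
  proof
    assume "n a = 2"
    then have "g (g a) = a" using g_n[of a] by (simp add: numeral_2_eq_2)
    then have "s a = t (g a)" "t a = s (g a)" using sg by metis+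
    then show False using no_2cycles by blast
  qed
  show ?thesis using pos n1 n2 by linarith
qed

lemma n_funpow[simp]: "n ((g ^^ j) a) = n a" using orbit_size_funpow[OF inj_g] .
lemma n_g[simp]: "n (g a) = n a" using orbit_size_step[OF inj_g] .

lemma g_mod: "(g ^^ k) a = (g ^^ (k mod n a)) a"
  using funpow_mod_per[OF inj_g] n_per by simp

lemma g_inj_on: "inj_on (\<lambda>k. (g ^^ k) a) {..<n a}"
  using per_inj_on[OF inj_g] n_per by simp

lemma n_le_card: "n a \<le> card (UNIV :: 'a set)"
  unfolding orbit_size_def by (rule card_mono) auto

definition trw :: "'a \<Rightarrow> 'a list" where "trw a = [a, f a, f (f a)]"
definition gw :: "'a \<Rightarrow> 'a list" where "gw a = map (\<lambda>k. (g ^^ k) a) [0..<n a]"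
definition gp :: "'a \<Rightarrow> 'a list" where "gp a = map (\<lambda>k. (g ^^ k) a) [1..<n a]"

lemma length_gw[simp]: "length (gw a) = n a" by (simp add: gw_def)
lemma length_gp[simp]: "length (gp a) = n a - 1" by (simp add: gp_def)
lemma gw_nth: "k < n a \<Longrightarrow> gw a ! k = (g ^^ k) a" by (simp add: gw_def)
lemma gp_nth: "k < n a - 1 \<Longrightarrow> gp a ! k = (g ^^ Suc k) a" by (simp add: gp_def)
lemma gw_Cons: "gw a = a # gp a"
proof -
  have "0 < n a" using n_ge3[of a] by simp
  then show ?thesis by (simp add: gw_def gp_def upt_conv_Cons)
qed
lemma gw_ne[simp]: "gw a \<noteq> []" by (simp add: gw_Cons)
lemma hd_gw[simp]: "hd (gw a) = a" by (simp add: gw_Cons)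
lemma hd_trw[simp]: "hd (trw a) = a" by (simp add: trw_def)
lemma trw_ne[simp]: "trw a \<noteq> []" by (simp add: trw_def)
lemma length_trw[simp]: "length (trw a) = 3" by (simp add: trw_def)

lemma chain_trw: "chain f (trw a)"
  unfolding chain_def trw_def by (auto simp: less_Suc_eq nth_Cons split: nat.splits)
lemma chain_gw: "chain g (gw a)"
  unfolding chain_def by (auto simp: gw_nth)
lemma chain_gp: "chain g (gp a)"
  unfolding chain_def by (auto simp: gp_nth)
lemma chain_ff: "chain f [f a, f (f a)]"
  unfolding chain_def by (auto simp: less_Suc_eq nth_Cons split: nat.splits)

lemma not_fg_chain: "chain f L \<Longrightarrow> chain g L \<Longrightarrow> 2 \<le> length L \<Longrightarrow> False"
proof -
  assume a: "chain f L" "chain g L" "2 \<le> length L"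
  then have "Suc 0 < length L" by simp
  then have "L ! Suc 0 = f (L ! 0)" "L ! Suc 0 = g (L ! 0)" using a unfolding chain_def by blast+
  then show False using f_ne_g by metis
qed

lemma gp_len2: "2 \<le> length (gp a)" using n_ge3[of a] by simp

lemma gw_inj[simp]: "gw a = gw b \<longleftrightarrow> a = b" by (metis hd_gw)
lemma trw_inj[simp]: "trw a = trw b \<longleftrightarrow> a = b" by (metis hd_trw)
lemma gw_ne_trw[simp]: "gw a \<noteq> trw b"
proof
  assume "gw a = trw b"
  then have "chain f (gw a)" using chain_trw by simp
  moreover have "2 \<le> length (gw a)" using n_ge3[of a] by simp
  ultimately show False using not_fg_chain chain_gw by blast
qed

lemma rotate1_trw: "rotate1 (trw a) = trw (f a)" by (simp add: trw_def)
lemma rotate_trw: "rotate j (trw a) = trw ((f ^^ j) a)"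
  by (induction j) (simp_all add: rotate1_trw)

lemma rotate1_gw: "rotate1 (gw a) = gw (g a)"
proof (rule nth_equalityI)
  show "length (rotate1 (gw a)) = length (gw (g a))" by simp
  fix k assume "k < length (rotate1 (gw a))"
  then have k: "k < n a" by simp
  have "rotate1 (gw a) ! k = gw a ! (Suc k mod n a)" using k by (simp add: nth_rotate1)
  also have "\<dots> = (g ^^ (Suc k mod n a)) a" using k n_ge3[of a] by (simp add: gw_nth)
  also have "\<dots> = (g ^^ Suc k) a" using g_mod[of "Suc k" a] by simp
  also have "\<dots> = gw (g a) ! k" using k by (simp add: gw_nth funpow_swap1)
  finally show "rotate1 (gw a) ! k = gw (g a) ! k" .
qed

lemma rotate_gw: "rotate j (gw a) = gw ((g ^^ j) a)"
  by (induction j) (simp_all add: rotate1_gw)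

abbreviation W where "W \<equiv> QP_potential s f g c Rf Rg"

lemma W_alt: "W p = (\<Sum>a\<in>Rf. if p = cyc s (trw a) then 1 else 0)
     - (\<Sum>b\<in>Rg. if p = cyc s (gw b) then c b else 0)"
  unfolding QP_potential_def delta_def trw_def gw_def
  by (simp add: if_distrib cong: if_cong)

lemma cyc_eq[simp]: "cyc s L = cyc s M \<longleftrightarrow> L = M" by (auto simp: cyc_def)

lemma W_trw: "W (cyc s (trw z)) = (if z \<in> Rf then 1 else 0)"
  unfolding W_alt by (simp add: gw_ne_trw[symmetric])

lemma W_gw: "W (cyc s (gw z)) = (if z \<in> Rg then - c z else 0)"
  unfolding W_alt by (simp add: gw_ne_trw)

lemma W_other: "(\<forall>z. L \<noteq> trw z) \<Longrightarrow> (\<forall>z. L \<noteq> gw z) \<Longrightarrow> W (cyc s L) = 0"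
  unfolding W_alt by simp

lemma f_funpow3: "(f ^^ k) a \<in> {a, f a, f (f a)}"
proof (induction k)
  case 0 then show ?case by simp
next
  case (Suc k) then show ?case by auto
qed

lemma sum_trw: "(\<Sum>j<3. W (cyc s (trw ((f ^^ j) x)))) = 1"
proof -
  obtain b where b: "b \<in> Rf" "\<exists>k. (f ^^ k) x = b"
    and u: "\<And>b'. b' \<in> Rf \<Longrightarrow> \<exists>k. (f ^^ k) x = b' \<Longrightarrow> b' = b"
    using Rf unfolding orbit_reps_def by metis
  have o0: "\<exists>k. (f ^^ k) x = x" by (rule exI[of _ 0]) simp
  have o1: "\<exists>k. (f ^^ k) x = f x" by (rule exI[of _ 1]) simp
  have o2: "\<exists>k. (f ^^ k) x = f (f x)" by (rule exI[of _ 2]) (simp add: numeral_2_eq_2)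
  have bin: "b \<in> {x, f x, f (f x)}" using b f_funpow3 by blast
  have d1: "x \<noteq> f x" "x \<noteq> f (f x)" "f x \<noteq> f (f x)" using f_ne by metis+
  have "(\<Sum>j<3. W (cyc s (trw ((f ^^ j) x))))
      = (if x \<in> Rf then 1 else 0) + (if f x \<in> Rf then 1 else 0) + (if f (f x) \<in> Rf then 1 else 0)"
    by (simp add: W_trw numeral_3_eq_3 lessThan_Suc)
  also have "\<dots> = 1"
    using bin u[OF _ o0] u[OF _ o1] u[OF _ o2] b(1) d1 by auto
  finally show ?thesis .
qed

lemma sum_gw: "(\<Sum>j<n x. W (cyc s (gw ((g ^^ j) x)))) = - c x"
proof -
  obtain b where b: "b \<in> Rg" "\<exists>k. (g ^^ k) x = b"
    and u: "\<And>b'. b' \<in> Rg \<Longrightarrow> \<exists>k. (g ^^ k) x = b' \<Longrightarrow> b' = b"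
    using Rg unfolding orbit_reps_def by metis
  obtain k where k: "(g ^^ k) x = b" using b by blast
  define j0 where "j0 = k mod n x"
  have j0: "j0 < n x" "(g ^^ j0) x = b" using n_ge3[of x] k g_mod[of k x] by (auto simp: j0_def)
  have "(\<Sum>j<n x. W (cyc s (gw ((g ^^ j) x)))) = (\<Sum>j<n x. if j = j0 then - c x else 0)"
  proof (rule sum.cong)
    fix j assume j: "j \<in> {..<n x}"
    show "W (cyc s (gw ((g ^^ j) x))) = (if j = j0 then - c x else 0)"
    proof (cases "(g ^^ j) x \<in> Rg")
      case True
      then have "(g ^^ j) x = b" using u by blast
      then have "j = j0" using g_inj_on[of x] j j0 unfolding inj_on_def by auto
      then show ?thesis using True by (simp add: W_gw)
    next
      case False
      then have "j \<noteq> j0" using j0 b by auto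
      then show ?thesis using False by (simp add: W_gw)
    qed
  qed simp
  also have "\<dots> = - c x" using j0 by simp
  finally show ?thesis .
qed

lemma gp_ne[simp]: "gp a \<noteq> []"
proof
  assume "gp a = []" then show False using gp_len2[of a] by simp
qed
lemma hd_gp: "hd (gp a) = g a"
  using n_ge3[of a] by (simp add: hd_conv_nth gp_nth)
lemma last_gp: "t (last (gp a)) = s a"
proof -
  have "last (gp a) = gp a ! (n a - 2)" using n_ge3[of a] by (simp add: last_conv_nth numeral_2_eq_2)
  also have "\<dots> = (g ^^ (n a - 1)) a" using n_ge3[of a] by (simp add: gp_nth Suc_diff_Suc numeral_2_eq_2)
  finally have "t (last (gp a)) = s (g ((g ^^ (n a - 1)) a))" by simp
  also have "g ((g ^^ (n a - 1)) a) = (g ^^ n a) a"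
    using n_ge3[of a] by (metis funpow.simps(2) comp_apply Suc_diff_1 not_numeral_le_zero not_gr_zero)
  finally show ?thesis by simp
qed

lemma path_gp: "is_path s t (t x, gp x)"
  unfolding is_path_def using chain_gp[of x] by (auto simp: hd_gp chain_def)

lemma path_ff: "is_path s t (t x, [f x, f (f x)])"
  unfolding is_path_def by (auto simp: less_Suc_eq)

lemma cder_char: "cder s t x W (v, q) =
   (if v = t x \<and> q = [f x, f (f x)] then 1 else 0) - (if v = t x \<and> q = gp x then c x else 0)"
proof (cases "v = t x \<and> q = [f x, f (f x)]")
  case True
  have ne: "q \<noteq> gp x"
  proof
    assume "q = gp x"
    then have "chain g q" using chain_gp by simp
    moreover have "chain f q" using True chain_ff by simp
    ultimately show False using not_fg_chain[of q] True by simp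
  qed
  have "x # q = trw x" using True by (simp add: trw_def)
  then have "cder s t x W (v, q) = (\<Sum>j<3. W (cyc s (trw ((f ^^ j) x))))"
    unfolding cder_def using True path_ff by (simp add: rotate_trw pend_def numeral_3_eq_3)
  then show ?thesis using True ne sum_trw by simp
next
  case F1: False
  show ?thesis
  proof (cases "v = t x \<and> q = gp x")
    case True
    have "x # q = gw x" using True by (simp add: gw_Cons)
    moreover have "Suc (length q) = n x" using True n_ge3[of x] by simp
    ultimately have "cder s t x W (v, q) = (\<Sum>j<n x. W (cyc s (gw ((g ^^ j) x))))"
      unfolding cder_def using True path_gp last_gp by (simp add: rotate_gw pend_def)
    then show ?thesis using True F1 sum_gw by simp
  next
    case F2: False
    have "cder s t x W (v, q) = 0"
    proof (cases "is_path s t (v, q) \<and> v = t x \<and> pend t v q = s x")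
      case False then show ?thesis unfolding cder_def by (simp only: split_conv if_False)
    next
      case True
      have "W (cyc s (rotate j (x # q))) = 0" for j
      proof (rule W_other; intro allI notI)
        fix z assume z: "rotate j (x # q) = trw z"
        have "x # q = rotate ((length (x # q) - 1) * j) (rotate j (x # q))"
          by (rule rotate_back) simp
        then have "x # q = rotate ((length (x # q) - 1) * j) (trw z)"
          unfolding z .
        then have "x # q = trw ((f ^^ ((length (x # q) - 1) * j)) z)" by (metis rotate_trw)
        then have "x # q = trw x" by (metis hd_trw list.sel(1))
        then show False using F1 True by (simp add: trw_def)
      next
        fix z assume z: "rotate j (x # q) = gw z"
        have "x # q = rotate ((length (x # q) - 1) * j) (rotate j (x # q))"
          by (rule rotate_back) simp
        then have "x # q = rotate ((length (x # q) - 1) * j) (gw z)"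
          unfolding z .
        then have "x # q = gw ((g ^^ ((length (x # q) - 1) * j)) z)" by (metis rotate_gw)
        then have "x # q = gw x" by (metis hd_gw list.sel(1))
        then show False using F2 True by (simp add: gw_Cons)
      qed
      then show ?thesis unfolding cder_def by simp
    qed
    then show ?thesis by (simp only: F1 F2 if_False diff_zero)
  qed
qed

lemma pmul2: "pmul t (pmul t u D) w (v, L) = (\<Sum>i\<in>{0..length L}. \<Sum>j\<in>{0..i}.
    u (v, take j L) * D (pend t v (take j L), drop j (take i L)) * w (pend t v (take i L), drop i L))"
  unfolding pmul_def
  by (auto simp: sum_distrib_right min_absorb1 min_def intro!: sum.cong split: if_splits)

lemma collapse:
  assumes "i \<le> length L"
  shows "(\<Sum>j\<in>{0..i}. if Q j \<and> drop j (take i L) = P then F j else 0)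
       = (if length P \<le> i \<and> Q (i - length P) \<and> drop (i - length P) (take i L) = P
          then F (i - length P) else (0::'k))"
proof -
  have "(\<Sum>j\<in>{0..i}. if Q j \<and> drop j (take i L) = P then F j else 0)
      = (\<Sum>j\<in>{0..i}. if j = i - length P then
           (if length P \<le> i \<and> Q (i - length P) \<and> drop (i - length P) (take i L) = P
            then F (i - length P) else 0) else 0)"
  proof (rule sum.cong)
    fix j assume j: "j \<in> {0..i}"
    show "(if Q j \<and> drop j (take i L) = P then F j else 0) = (if j = i - length P then
           (if length P \<le> i \<and> Q (i - length P) \<and> drop (i - length P) (take i L) = P
            then F (i - length P) else 0) else 0)"
    proof (cases "drop j (take i L) = P")
      case True
      then have "length P = i - j" using assms j by auto
      then show ?thesis using True j by auto
    next
      case False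
      then show ?thesis by auto
    qed
  qed simp
  also have "\<dots> = (if length P \<le> i \<and> Q (i - length P) \<and> drop (i - length P) (take i L) = P
          then F (i - length P) else 0)" by simp
  finally show ?thesis .
qed

definition Sx :: "('v \<times> 'a list \<Rightarrow> 'k) \<Rightarrow> ('v \<times> 'a list \<Rightarrow> 'k) \<Rightarrow> 'a \<Rightarrow> 'a list \<Rightarrow> 'v \<Rightarrow> 'a list \<Rightarrow> 'k" where
  "Sx u w x P v L = (\<Sum>i\<in>{0..length L}.
     if length P \<le> i \<and> pend t v (take (i - length P) L) = t x \<and> drop (i - length P) (take i L) = P
     then u (v, take (i - length P) L) * w (pend t v (take i L), drop i L) else 0)"

lemma Z_decomp: "pmul t (pmul t u (cder s t x W)) w (v, L)
   = Sx u w x [f x, f (f x)] v L - c x * Sx u w x (gp x) v L"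
proof -
  have "pmul t (pmul t u (cder s t x W)) w (v, L)
    = (\<Sum>i\<in>{0..length L}. (\<Sum>j\<in>{0..i}.
         if pend t v (take j L) = t x \<and> drop j (take i L) = [f x, f (f x)]
         then u (v, take j L) * w (pend t v (take i L), drop i L) else 0)
       - c x * (\<Sum>j\<in>{0..i}.
         if pend t v (take j L) = t x \<and> drop j (take i L) = gp x
         then u (v, take j L) * w (pend t v (take i L), drop i L) else 0))"
  proof -
    have e: "u a * cder s t x W (pv, dq) * w b
      = (if pv = t x \<and> dq = [f x, f (f x)] then u a * w b else 0)
        - c x * (if pv = t x \<and> dq = gp x then u a * w b else 0)" for a pv dq b
      by (simp add: cder_char algebra_simps)
    show ?thesis unfolding pmul2 e sum_subtractf sum_distrib_left[symmetric] ..
  qed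
  also have "\<dots> = Sx u w x [f x, f (f x)] v L - c x * Sx u w x (gp x) v L"
  proof -
    have "(\<Sum>j\<in>{0..i}.
         if pend t v (take j L) = t x \<and> drop j (take i L) = P
         then u (v, take j L) * w (pend t v (take i L), drop i L) else 0)
      = (if length P \<le> i \<and> pend t v (take (i - length P) L) = t x \<and> drop (i - length P) (take i L) = P
     then u (v, take (i - length P) L) * w (pend t v (take i L), drop i L) else 0)"
      if "i \<in> {0..length L}" for i P
      using collapse[where Q="\<lambda>j. pend t v (take j L) = t x" and P=P and
          F="\<lambda>j. u (v, take j L) * w (pend t v (take i L), drop i L)" and i=i and L=L] that by simp
    note cl = this
    show ?thesis
      apply (rule trans[OF sum.cong[OF refl]])
       apply (rule arg_cong2[where f="\<lambda>a b. a - c x * b"])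
        apply (rule cl, assumption)
       apply (rule cl, assumption)
      apply (simp only: Sx_def sum_subtractf sum_distrib_left)
      done
  qed
  finally show ?thesis .
qed

lemma Sx_zero: "(\<And>i. i \<le> length L \<Longrightarrow> drop (i - length P) (take i L) \<noteq> P) \<Longrightarrow> Sx u w x P v L = 0"
  unfolding Sx_def by (intro sum.neutral) auto

lemma S1_gw: "Sx u w x [f x, f (f x)] v (gw y) = 0"
proof (rule Sx_zero)
  fix i
  show "drop (i - length [f x, f (f x)]) (take i (gw y)) \<noteq> [f x, f (f x)]"
  proof
    assume e: "drop (i - length [f x, f (f x)]) (take i (gw y)) = [f x, f (f x)]"
    have "chain g [f x, f (f x)]" using chain_sub[OF chain_gw] e by metis
    then show False using not_fg_chain[OF chain_ff] by simp
  qed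
qed

lemma S2_trw: "Sx u w x (gp x) v (trw y) = 0"
proof (rule Sx_zero)
  fix i
  show "drop (i - length (gp x)) (take i (trw y)) \<noteq> gp x"
  proof
    assume e: "drop (i - length (gp x)) (take i (trw y)) = gp x"
    have "chain f (gp x)" using chain_sub[OF chain_trw] e by metis
    then show False using not_fg_chain[OF _ chain_gp] gp_len2 by blast
  qed
qed

lemma S1_trw: "Sx u w x [f x, f (f x)] (s y) (trw y)
   = (if y = f x then u (t x, []) * w (s x, [x]) else 0) + (if y = x then u (s x, [x]) * w (s x, []) else 0)"
proof -
  have "Sx u w x [f x, f (f x)] (s y) (trw y) =
     (if s y = t x \<and> [y, f y] = [f x, f (f x)] then u (s y, []) * w (t (f y), [f (f y)]) else 0)
     + (if t y = t x \<and> [f y, f (f y)] = [f x, f (f x)] then u (s y, [y]) * w (t (f (f y)), []) else 0)"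
    unfolding Sx_def by (simp add: trw_def numeral_3_eq_3 atLeast0_atMost_Suc pend_def)
  also have "\<dots> = (if y = f x then u (t x, []) * w (s x, [x]) else 0) + (if y = x then u (s x, [x]) * w (s x, []) else 0)"
  proof (cases "y = x")
    case True then have "y \<noteq> f x" using f_ne(1)[of x] by metis
    then show ?thesis using True by simp
  next
    case False then show ?thesis by auto
  qed
  finally show ?thesis .
qed

lemma take_gw_g: "take (n x - 1) (gw (g x)) = gp x"
proof (rule nth_equalityI)
  show "length (take (n x - 1) (gw (g x))) = length (gp x)" by simp
  fix k assume "k < length (take (n x - 1) (gw (g x)))"
  then have k: "k < n x - 1" by simp
  then show "take (n x - 1) (gw (g x)) ! k = gp x ! k"
    by (simp add: gw_nth gp_nth funpow_swap1)
qed

lemma drop_gw_g: "drop (n x - 1) (gw (g x)) = [x]"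
proof (rule nth_equalityI)
  show "length (drop (n x - 1) (gw (g x))) = length [x]" using n_ge3[of x] by simp
  fix k assume "k < length (drop (n x - 1) (gw (g x)))"
  then have k: "k = 0" using n_ge3[of x] by simp
  have "gw (g x) ! (n x - 1) = (g ^^ (n x - 1)) (g x)" using n_ge3[of x] by (simp add: gw_nth)
  also have "\<dots> = (g ^^ n x) x" using n_ge3[of x]
    by (metis funpow_Suc_right comp_apply Suc_diff_1 not_numeral_le_zero not_gr_zero)
  finally show "drop (n x - 1) (gw (g x)) ! k = [x] ! k" using k n_ge3[of x] by simp
qed

lemmas take_gw_g' = take_gw_g[simplified]
lemmas drop_gw_g' = drop_gw_g[simplified]

lemma last_gw: "t (last (gw a)) = s a"
  using last_gp[of a] by (simp add: gw_Cons)

lemma S2_gw_char: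
  assumes i: "i \<le> n y"
  shows "(length (gp x) \<le> i \<and> pend t (s y) (take (i - length (gp x)) (gw y)) = t x
          \<and> drop (i - length (gp x)) (take i (gw y)) = gp x)
     \<longleftrightarrow> (y = g x \<and> i = n x - 1) \<or> (y = x \<and> i = n x)"
proof
  assume h: "length (gp x) \<le> i \<and> pend t (s y) (take (i - length (gp x)) (gw y)) = t x
          \<and> drop (i - length (gp x)) (take i (gw y)) = gp x"
  define j where "j = i - length (gp x)"
  have m: "length (gp x) = n x - 1" "3 \<le> n x" using n_ge3[of x] by simp_all
  have d: "drop j (take i (gw y)) = gp x" using h j_def by simp
  have "0 < length (drop j (take i (gw y)))" using d gp_len2[of x] by simp
  then have "drop j (take i (gw y)) ! 0 = gw y ! j" using nth_drop_take by fastforce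
  moreover have "gp x ! 0 = g x" using m by (simp add: gp_nth)
  moreover have jl: "j < n y" using m i n_ge3[of y] unfolding j_def by arith
  ultimately have gj: "(g ^^ j) y = g x" using d by (simp add: gw_nth)
  then have "n y = n x" by (metis n_funpow n_g)
  then have "j = 0 \<or> j = 1" using h m i j_def by auto
  then show "(y = g x \<and> i = n x - 1) \<or> (y = x \<and> i = n x)"
  proof
    assume "j = 0"
    then have "i = n x - 1" using h m i j_def by arith
    moreover have "y = g x" using gj \<open>j = 0\<close> by simp
    ultimately show ?thesis by simp
  next
    assume "j = 1"
    then have "i = n x" using h m i j_def by arith
    moreover have "y = x" using gj \<open>j = 1\<close> by simp
    ultimately show ?thesis by simp
  qed
next
  assume "(y = g x \<and> i = n x - 1) \<or> (y = x \<and> i = n x)"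
  then show "length (gp x) \<le> i \<and> pend t (s y) (take (i - length (gp x)) (gw y)) = t x
          \<and> drop (i - length (gp x)) (take i (gw y)) = gp x"
  proof
    assume "y = g x \<and> i = n x - 1"
    then show ?thesis by (simp add: take_gw_g' pend_def)
  next
    assume "y = x \<and> i = n x"
    then show ?thesis using n_ge3[of x] by (simp add: gw_Cons pend_def)
  qed
qed

lemma S2_gw: "Sx u w x (gp x) (s y) (gw y)
   = (if y = g x then u (t x, []) * w (s x, [x]) else 0) + (if y = x then u (s x, [x]) * w (s x, []) else 0)"
proof -
  define F where "F i = u (s y, take (i - length (gp x)) (gw y)) * w (pend t (s y) (take i (gw y)), drop i (gw y))" for i
  have gx: "g x \<noteq> x" using no_loops sg by metis
  have "Sx u w x (gp x) (s y) (gw y) = (\<Sum>i\<in>{0..n y}.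
      (if y = g x \<and> i = n x - 1 then F i else 0) + (if y = x \<and> i = n x then F i else 0))"
    unfolding Sx_def F_def
  proof (rule sum.cong)
    show "{0..length (gw y)} = {0..n y}" by simp
  next
    fix i assume "i \<in> {0..n y}"
    then have i: "i \<le> n y" by simp
    show "(if length (gp x) \<le> i \<and> pend t (s y) (take (i - length (gp x)) (gw y)) = t x
          \<and> drop (i - length (gp x)) (take i (gw y)) = gp x
         then u (s y, take (i - length (gp x)) (gw y)) * w (pend t (s y) (take i (gw y)), drop i (gw y)) else 0)
      = (if y = g x \<and> i = n x - 1 then u (s y, take (i - length (gp x)) (gw y)) * w (pend t (s y) (take i (gw y)), drop i (gw y)) else 0)
        + (if y = x \<and> i = n x then u (s y, take (i - length (gp x)) (gw y)) * w (pend t (s y) (take i (gw y)), drop i (gw y)) else 0)"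
      unfolding S2_gw_char[OF i] using gx by auto
  qed
  also have "\<dots> = (if y = g x then F (n x - 1) else 0) + (if y = x then F (n x) else 0)"
    by (simp add: sum.distrib)
  also have "\<dots> = (if y = g x then u (t x, []) * w (s x, [x]) else 0) + (if y = x then u (s x, [x]) * w (s x, []) else 0)"
  proof -
    have l: "length (gp x) = n x - 1" by simp
    have "F (n x - 1) = u (t x, []) * w (s x, [x])" if "y = g x"
      unfolding F_def l using that n_ge3[of x]
      by (simp add: take_gw_g' drop_gw_g' pend_def last_gp[simplified])
    moreover have "F (n x) = u (s x, [x]) * w (s x, [])" if "y = x"
    proof -
      have "n x - (n x - 1) = 1" using n_ge3[of x] by simp
      moreover have "take 1 (gw x) = [x]" by (simp add: gw_Cons)
      ultimately show ?thesis unfolding F_def l using that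
        by (simp add: pend_def last_gw)
    qed
    ultimately show ?thesis by simp
  qed
  finally show ?thesis .
qed

definition phi :: "('v \<times> 'a list \<Rightarrow> 'k) \<Rightarrow> 'k" where
  "phi X = (\<Sum>y\<in>UNIV. X (s y, trw y)) + (\<Sum>y\<in>UNIV. X (s y, gw y) * inverse (c y))"

lemma phi_Z: "phi (pmul t (pmul t u (cder s t x W)) w) = 0"
proof -
  define A where "A = u (t x, []) * w (s x, [x])"
  define B where "B = u (s x, [x]) * w (s x, [])"
  have gx: "g x \<noteq> x" using no_loops sg by metis
  have fx: "f x \<noteq> x" by simp
  have cx: "c x \<noteq> 0" using c_nz by blast
  have 1: "(\<Sum>y\<in>UNIV. pmul t (pmul t u (cder s t x W)) w (s y, trw y))
      = (\<Sum>y\<in>UNIV. (if y = f x then A else 0) + (if y = x then B else 0))"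
    by (rule sum.cong) (simp_all add: Z_decomp S1_trw S2_trw A_def B_def)
  have 2: "(\<Sum>y\<in>UNIV. pmul t (pmul t u (cder s t x W)) w (s y, gw y) * inverse (c y))
      = (\<Sum>y\<in>UNIV. (if y = g x then - A else 0) + (if y = x then - B else 0))"
  proof (rule sum.cong)
    fix y :: 'a
    show "pmul t (pmul t u (cder s t x W)) w (s y, gw y) * inverse (c y)
      = (if y = g x then - A else 0) + (if y = x then - B else 0)"
      unfolding Z_decomp S1_gw S2_gw A_def[symmetric] B_def[symmetric]
      using gx cx c_const by (auto simp: field_simps)
  qed simp
  show ?thesis unfolding phi_def 1 2 using gx fx
    by (simp add: sum.distrib)
qed

lemma phi_add: "phi (\<lambda>p. X p + Y p) = phi X + phi Y"
  unfolding phi_def by (simp add: sum.distrib algebra_simps)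

lemma phi_diff: "phi (\<lambda>p. X p - Y p) = phi X - phi Y"
  unfolding phi_def by (simp add: sum_subtractf algebra_simps)

lemma phi_scale: "phi (\<lambda>p. k * X p) = k * phi X"
  unfolding phi_def by (simp add: sum_distrib_left algebra_simps)

lemma phi_local:
  assumes "\<forall>p. length (snd p) \<le> card (UNIV :: 'a set) + 3 \<longrightarrow> X p = Y p"
  shows "phi X = phi Y"
proof -
  have "X (s y, trw y) = Y (s y, trw y)" for y using assms by simp
  moreover have "X (s y, gw y) = Y (s y, gw y)" for y using assms n_le_card[of y] by simp
  ultimately show ?thesis unfolding phi_def by simp
qed

lemma phi_closure:
  assumes "\<forall>z\<in>S. phi z = 0" "x \<in> mclosure s t S"
  shows "phi x = 0"
proof -
  obtain z where "z \<in> S" "\<forall>p. length (snd p) \<le> card (UNIV :: 'a set) + 3 \<longrightarrow> x p = z p"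
    using assms(2) unfolding mclosure_def by blast
  then show ?thesis using phi_local assms(1) by metis
qed

lemma phi_ideal: "z \<in> ideal_span s t (range (\<lambda>a. cder s t a W)) \<Longrightarrow> phi z = 0"
proof (induction rule: ideal_span.induct)
  case zero then show ?case unfolding phi_def by simp
next
  case (step x y u w)
  then obtain a where "y = cder s t a W" by blast
  then show ?case using step phi_Z by (simp add: phi_add)
qed

lemma sum_reindex_bij: "bij h \<Longrightarrow> (\<Sum>y\<in>UNIV. F y) = (\<Sum>y\<in>UNIV. F (h y))"
  using sum.reindex[of h UNIV F] by (simp add: bij_is_inj bij_is_surj comp_def)

lemma trw_cyc: "(s y, trw y) = cyc s M \<longleftrightarrow> trw y = M" by (auto simp: cyc_def)
lemma gw_cyc: "(s y, gw y) = cyc s M \<longleftrightarrow> gw y = M" by (auto simp: cyc_def)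

lemma phi_delta_rot:
  assumes "is_cycle s t (v, xs)"
  shows "phi (delta (v, xs)) = phi (delta (cyc s (rotate1 xs)))"
proof -
  have ne: "xs \<noteq> []" and v: "v = s (hd xs)" using assms unfolding is_cycle_def is_path_def by auto
  have p: "(v, xs) = cyc s xs" using v by (simp add: cyc_def)
  have r: "rotate1 a = rotate1 b \<longleftrightarrow> a = b" for a b :: "'a list"
    using inj_rotate1 by (auto dest: injD)
  have t1: "(\<Sum>y\<in>UNIV. (if trw y = rotate1 xs then 1 else 0) :: 'k)
        = (\<Sum>y\<in>UNIV. if trw y = xs then 1 else 0)"
    by (subst sum_reindex_bij[OF bij_f]) (simp add: rotate1_trw[symmetric] r)
  have t2: "(\<Sum>y\<in>UNIV. (if gw y = rotate1 xs then 1 else 0) * inverse (c y) :: 'k)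
        = (\<Sum>y\<in>UNIV. (if gw y = xs then 1 else 0) * inverse (c y))"
    by (subst sum_reindex_bij[OF bij_g]) (simp add: rotate1_gw[symmetric] r c_const)
  show ?thesis unfolding phi_def delta_def p trw_cyc gw_cyc
    using t1 t2 by (simp add: eq_commute[of "cyc s _"])
qed

lemma phi_comm: "z \<in> cyc_comm_span s t \<Longrightarrow> phi z = 0"
proof (induction rule: cyc_comm_span.induct)
  case zero then show ?case unfolding phi_def by simp
next
  case (step x v xs k)
  have "phi (\<lambda>p. x p + k * (delta (v, xs) p - delta (cyc s (rotate1 xs)) p))
      = phi x + k * (phi (delta (v, xs)) - phi (delta (cyc s (rotate1 xs))))"
    by (simp add: phi_add phi_scale phi_diff)
  then show ?case using step phi_delta_rot by simp
qed

lemma not_rigid: "\<not> rigid s t W"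
proof
  assume R: "rigid s t W"
  obtain a0 :: 'a where True by blast
  define P :: "'v \<times> 'a list \<Rightarrow> 'k" where "P = (\<lambda>q. if q = (s a0, trw a0) then 1 else 0)"
  have cyc0: "is_cycle s t (s a0, trw a0)"
    unfolding is_cycle_def is_path_def by (auto simp: trw_def pend_def less_Suc_eq nth_Cons split: nat.splits)
  have "potential s t P" unfolding potential_def P_def using cyc0 by auto
  then obtain Y where Y: "Y \<in> jacobian_ideal s t W" "cyc_equiv s t P Y"
    using R unfolding rigid_def by blast
  have "phi Y = 0" using Y(1) phi_closure phi_ideal unfolding jacobian_ideal_def by blast
  moreover have "phi (\<lambda>p. P p - Y p) = 0" using Y(2) phi_closure phi_comm unfolding cyc_equiv_def by blast
  ultimately have "phi P = 0" by (simp add: phi_diff)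
  moreover have "phi P = 1"
  proof -
    have e: "(s y = s a0 \<and> y = a0) = (y = a0)" for y by auto
    have "(\<Sum>y\<in>UNIV. P (s y, trw y)) = 1" unfolding P_def by (simp add: e)
    moreover have "(\<Sum>y\<in>UNIV. P (s y, gw y) * inverse (c y)) = 0" unfolding P_def by simp
    ultimately show ?thesis unfolding phi_def by simp
  qed
  ultimately show False by simp
qed

end

theorem proposition4p4:
  fixes s t :: "'a::finite \<Rightarrow> 'v::finite"
    and f g :: "'a \<Rightarrow> 'a"
    and c :: "'a \<Rightarrow> 'k::field"
    and Rf Rg :: "'a set"
  assumes connected: "\<forall>u v. (u, v) \<in> (range (\<lambda>a. (s a, t a)) \<union> range (\<lambda>a. (t a, s a)))\<^sup>*"
    and no_loops: "\<forall>a. s a \<noteq> t a"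
    and no_2cycles: "\<forall>a b. \<not> (s a = t b \<and> t a = s b)"
    and out2: "\<forall>v. card {a. s a = v} = 2"
    and in2: "\<forall>v. card {a. t a = v} = 2"
    and bij_f: "bij f" and bij_g: "bij g"
    and fg: "\<forall>a. {f a, g a} = {b. s b = t a}"
    and f3: "f \<circ> f \<circ> f = id"
    and c_nz: "\<forall>a. c a \<noteq> 0"
    and c_const: "\<forall>a. c (g a) = c a"
    and Rf: "orbit_reps f Rf"
    and Rg: "orbit_reps g Rg"
    and cond: "(\<forall>a. 4 \<le> orbit_size g a \<or> 4 \<le> orbit_size g (f a))
             \<or> ((\<forall>a. orbit_size g a = 3) \<and> (\<Prod>b\<in>Rg. c b) \<noteq> 1)"
  shows "\<not> rigid s t (QP_potential s f g c Rf Rg)"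
proof -
  interpret QP s t f g c Rf Rg
    using no_loops no_2cycles out2 bij_f bij_g fg f3 c_nz c_const Rf Rg
    by unfold_locales
  show ?thesis by (rule not_rigid)
qed

end
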